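(* For every intuitionistic formula $\varphi$ in $p_1,\dots,p_n$, every model $M$ and every $x\in M^s$, \[ M^s,x\models\varphi\iff M^s,x\models s(\varphi). \]
   Context: $F_{HA}(n)$ is the free Heyting algebra on $p_1,\dots,p_n$ (intuitionistic formulas modulo IPC-equivalence) and $F_{\wedge,\to}(n)$ the free implicative meet-semilattice on $p_1,\dots,p_n$ ($(\wedge,\to)$-formulas modulo IPC-equivalence). $F_{\wedge,\to}(n)$ is finite, hence a Heyting algebra with join $\varphi\veebar\psi=\bigwedge\{\chi\in F_{\wedge,\to}(n): \varphi\le\chi,\ \psi\le\chi\}$ and bottom $p_1\wedge\cdots\wedge p_n$. $s:F_{HA}(n)\to F_{\wedge,\to}(n)$ is the unique Heyting homomorphism with $s(p_i)=p_i$; concretely $s(\varphi)$ is obtained by replacing each $\vee$ by $\veebar$ and $\bot$ by $p_1\wedge\cdots\wedge p_n$; $s(\varphi)$ is taken to be any $(\wedge,\to)$-formula representing this class. Models are posets with an order-preserving colouring $c:M\to\{0,1\}^n$ (componentwise order) and intuitionistic Kripke semantics ($x\models p_i$ iff $c(x)_i=1$). A point $x$ is separated if for some variable $q$, $x\not\models q$ but all $y>x$ satisfy $q$. $M^s$ is the set of separated points with the restricted order and colouring, regarded as a model in its own right. *)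

theory Defs
  imports Main
begin

text \<open>Intuitionistic propositional formulas. Variable Var i (i < n) stands for p_(i+1).\<close>
datatype form = Var nat | Bot | And form form | Or form form | Imp form form

fun vars :: "form \<Rightarrow> nat set" where
  "vars (Var i) = {i}"
| "vars Bot = {}"
| "vars (And a b) = vars a \<union> vars b"
| "vars (Or a b) = vars a \<union> vars b"
| "vars (Imp a b) = vars a \<union> vars b"

fun impl_form :: "form \<Rightarrow> bool" where
  "impl_form (Var i) = True"
| "impl_form Bot = False"
| "impl_form (And a b) = (impl_form a \<and> impl_form b)"
| "impl_form (Or a b) = False"
| "impl_form (Imp a b) = (impl_form a \<and> impl_form b)"

inductive ipc :: "form \<Rightarrow> bool" where
  K: "ipc (Imp A (Imp B A))"
| S: "ipc (Imp (Imp A (Imp B C)) (Imp (Imp A B) (Imp A C)))"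
| AndE1: "ipc (Imp (And A B) A)"
| AndE2: "ipc (Imp (And A B) B)"
| AndI: "ipc (Imp A (Imp B (And A B)))"
| OrI1: "ipc (Imp A (Or A B))"
| OrI2: "ipc (Imp B (Or A B))"
| OrE: "ipc (Imp (Imp A C) (Imp (Imp B C) (Imp (Or A B) C)))"
| BotE: "ipc (Imp Bot A)"
| MP: "ipc (Imp A B) \<Longrightarrow> ipc A \<Longrightarrow> ipc B"

definition ipc_equiv :: "form \<Rightarrow> form \<Rightarrow> bool" where
  "ipc_equiv A B \<longleftrightarrow> ipc (Imp A B) \<and> ipc (Imp B A)"

definition impl_n :: "nat \<Rightarrow> form \<Rightarrow> bool" where
  "impl_n n A \<longleftrightarrow> impl_form A \<and> vars A \<subseteq> {..<n}"

fun big_and :: "nat \<Rightarrow> form" where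
  "big_and 0 = Var 0"
| "big_and (Suc 0) = Var 0"
| "big_and (Suc k) = And (big_and k) (Var k)"

text \<open>The join in F_{and,imp}(n): chi represents the least upper bound of a and b,
  i.e. the meet of all upper bounds in F_{and,imp}(n).\<close>
definition is_join :: "nat \<Rightarrow> form \<Rightarrow> form \<Rightarrow> form \<Rightarrow> bool" where
  "is_join n a b chi \<longleftrightarrow> impl_n n chi \<and>
     (\<forall>th. impl_n n th \<longrightarrow> (ipc (Imp chi th) \<longleftrightarrow> ipc (Imp a th) \<and> ipc (Imp b th)))"

text \<open>s_rep n phi psi: psi is an (and,imp)-formula representing s(phi) in F_{and,imp}(n).\<close>
inductive s_rep :: "nat \<Rightarrow> form \<Rightarrow> form \<Rightarrow> bool" for n where
  sVar: "i < n \<Longrightarrow> impl_n n chi \<Longrightarrow> ipc_equiv chi (Var i) \<Longrightarrow> s_rep n (Var i) chi"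
| sBot: "impl_n n chi \<Longrightarrow> ipc_equiv chi (big_and n) \<Longrightarrow> s_rep n Bot chi"
| sAnd: "s_rep n a \<alpha> \<Longrightarrow> s_rep n b \<beta> \<Longrightarrow> impl_n n chi \<Longrightarrow> ipc_equiv chi (And \<alpha> \<beta>)
          \<Longrightarrow> s_rep n (And a b) chi"
| sImp: "s_rep n a \<alpha> \<Longrightarrow> s_rep n b \<beta> \<Longrightarrow> impl_n n chi \<Longrightarrow> ipc_equiv chi (Imp \<alpha> \<beta>)
          \<Longrightarrow> s_rep n (Imp a b) chi"
| sOr: "s_rep n a \<alpha> \<Longrightarrow> s_rep n b \<beta> \<Longrightarrow> is_join n \<alpha> \<beta> chi \<Longrightarrow> s_rep n (Or a b) chi"

definition model :: "nat \<Rightarrow> 'a set \<Rightarrow> ('a \<Rightarrow> 'a \<Rightarrow> bool) \<Rightarrow> ('a \<Rightarrow> nat \<Rightarrow> bool) \<Rightarrow> bool" where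
  "model n W le c \<longleftrightarrow>
     (\<forall>x\<in>W. le x x) \<and>
     (\<forall>x\<in>W. \<forall>y\<in>W. le x y \<longrightarrow> le y x \<longrightarrow> x = y) \<and>
     (\<forall>x\<in>W. \<forall>y\<in>W. \<forall>z\<in>W. le x y \<longrightarrow> le y z \<longrightarrow> le x z) \<and>
     (\<forall>x\<in>W. \<forall>y\<in>W. le x y \<longrightarrow> (\<forall>i<n. c x i \<longrightarrow> c y i))"

fun sat :: "'a set \<Rightarrow> ('a \<Rightarrow> 'a \<Rightarrow> bool) \<Rightarrow> ('a \<Rightarrow> nat \<Rightarrow> bool) \<Rightarrow> 'a \<Rightarrow> form \<Rightarrow> bool" where
  "sat W le c x (Var i) = c x i"
| "sat W le c x Bot = False"
| "sat W le c x (And a b) = (sat W le c x a \<and> sat W le c x b)"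
| "sat W le c x (Or a b) = (sat W le c x a \<or> sat W le c x b)"
| "sat W le c x (Imp a b) = (\<forall>y\<in>W. le x y \<longrightarrow> sat W le c y a \<longrightarrow> sat W le c y b)"

definition separated :: "nat \<Rightarrow> 'a set \<Rightarrow> ('a \<Rightarrow> 'a \<Rightarrow> bool) \<Rightarrow> ('a \<Rightarrow> nat \<Rightarrow> bool) \<Rightarrow> 'a \<Rightarrow> bool" where
  "separated n W le c x \<longleftrightarrow> (\<exists>q<n. \<not> c x q \<and> (\<forall>y\<in>W. le x y \<and> y \<noteq> x \<longrightarrow> c y q))"

text \<open>M^s: separated points of W, with restricted order and colouring.\<close>
definition sep_points :: "nat \<Rightarrow> 'a set \<Rightarrow> ('a \<Rightarrow> 'a \<Rightarrow> bool) \<Rightarrow> ('a \<Rightarrow> nat \<Rightarrow> bool) \<Rightarrow> 'a set" where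
  "sep_points n W le c = {x\<in>W. separated n W le c x}"

end

theory Submission
  imports Defs
begin

lemma ipc_id: "ipc (Imp A A)"
proof -
  have "ipc (Imp (Imp A (Imp (Imp A A) A)) (Imp (Imp A (Imp A A)) (Imp A A)))" by (rule ipc.S)
  then have "ipc (Imp (Imp A (Imp A A)) (Imp A A))" using ipc.K ipc.MP by blast
  then show ?thesis using ipc.K ipc.MP by blast
qed

inductive der :: "form set \<Rightarrow> form \<Rightarrow> bool" for G where
  hyp: "A \<in> G \<Longrightarrow> der G A"
| ax: "ipc A \<Longrightarrow> der G A"
| mp: "der G (Imp A B) \<Longrightarrow> der G A \<Longrightarrow> der G B"

lemma deduction: "der G B \<Longrightarrow> G = insert A D \<Longrightarrow> der D (Imp A B)"
proof (induction rule: der.induct)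
  case (hyp C)
  then show ?case
    by (metis der.ax der.hyp der.mp insert_iff ipc.K ipc_id)
next
  case (ax C)
  then show ?case by (meson der.ax der.mp ipc.K)
next
  case (mp C E)
  then show ?case by (meson der.ax der.mp ipc.S)
qed

lemma der_ipc: "der {} A \<Longrightarrow> ipc A"
  by (induction rule: der.induct) (auto intro: ipc.MP)

lemma or_bound: "ipc (Imp a (Imp (And (Imp a q) (Imp b q)) q))"
proof -
  let ?G = "{And (Imp a q) (Imp b q), a}"
  have "der ?G (Imp a q)" by (meson der.ax der.hyp der.mp insertCI ipc.AndE1)
  then have "der ?G q" by (meson der.hyp der.mp insertCI)
  then have "der {a} (Imp (And (Imp a q) (Imp b q)) q)" by (rule deduction) auto
  then have "der {} (Imp a (Imp (And (Imp a q) (Imp b q)) q))" by (rule deduction) auto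
  then show ?thesis by (rule der_ipc)
qed

lemma or_bound2: "ipc (Imp b (Imp (And (Imp a q) (Imp b q)) q))"
proof -
  let ?G = "{And (Imp a q) (Imp b q), b}"
  have "der ?G (Imp b q)" by (meson der.ax der.hyp der.mp insertCI ipc.AndE2)
  then have "der ?G q" by (meson der.hyp der.mp insertCI)
  then have "der {b} (Imp (And (Imp a q) (Imp b q)) q)" by (rule deduction) auto
  then have "der {} (Imp b (Imp (And (Imp a q) (Imp b q)) q))" by (rule deduction) auto
  then show ?thesis by (rule der_ipc)
qed

lemma persist:
  assumes tr: "\<forall>x\<in>W. \<forall>y\<in>W. \<forall>z\<in>W. le x y \<longrightarrow> le y z \<longrightarrow> le x z"
    and mo: "\<forall>i. \<forall>x\<in>W. \<forall>y\<in>W. le x y \<longrightarrow> c x i \<longrightarrow> c y i"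
  shows "x \<in> W \<Longrightarrow> y \<in> W \<Longrightarrow> le x y \<Longrightarrow> sat W le c x A \<Longrightarrow> sat W le c y A"
proof (induction A arbitrary: x y)
  case (Imp A1 A2)
  show ?case
  proof (simp, intro ballI impI)
    fix z assume z: "z \<in> W" "le y z" "sat W le c z A1"
    have "le x z" using tr Imp.prems z by blast
    then show "sat W le c z A2" using Imp.prems(4) z by simp
  qed
qed (use mo in auto)

lemma sound:
  assumes rf: "\<forall>x\<in>W. le x x"
    and tr: "\<forall>x\<in>W. \<forall>y\<in>W. \<forall>z\<in>W. le x y \<longrightarrow> le y z \<longrightarrow> le x z"
    and mo: "\<forall>i. \<forall>x\<in>W. \<forall>y\<in>W. le x y \<longrightarrow> c x i \<longrightarrow> c y i"
  shows "ipc A \<Longrightarrow> x \<in> W \<Longrightarrow> sat W le c x A"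
proof (induction arbitrary: x rule: ipc.induct)
  case (K A B)
  show ?case
  proof (simp, intro ballI impI)
    fix y z assume "y \<in> W" "le x y" "sat W le c y A" "z \<in> W" "le y z"
    then show "sat W le c z A" using persist[OF tr mo] by blast
  qed
next
  case (AndI A B)
  show ?case
  proof (simp, intro ballI impI)
    fix y z assume "y \<in> W" "le x y" "sat W le c y A" "z \<in> W" "le y z"
    then show "sat W le c z A" using persist[OF tr mo] by blast
  qed
next
  case (S A B C)
  show ?case
  proof (simp, intro ballI impI)
    fix y z w
    assume y: "y \<in> W" "le x y" and h1: "\<forall>u\<in>W. le y u \<longrightarrow> sat W le c u A \<longrightarrow>
         (\<forall>v\<in>W. le u v \<longrightarrow> sat W le c v B \<longrightarrow> sat W le c v C)"
      and z: "z \<in> W" "le y z" and h2: "\<forall>u\<in>W. le z u \<longrightarrow> sat W le c u A \<longrightarrow> sat W le c u B"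
      and w: "w \<in> W" "le z w" and wa: "sat W le c w A"
    have "le y w" using tr y z w by blast
    moreover have "sat W le c w B" using h2 w wa by blast
    ultimately show "sat W le c w C" using h1 w wa rf by blast
  qed
next
  case (OrE A C B)
  show ?case
  proof (simp only: sat.simps, intro ballI impI)
    fix y z w
    assume y: "y \<in> W" "le x y" and h1: "\<forall>u\<in>W. le y u \<longrightarrow> sat W le c u A \<longrightarrow> sat W le c u C"
      and z: "z \<in> W" "le y z" and h2: "\<forall>u\<in>W. le z u \<longrightarrow> sat W le c u B \<longrightarrow> sat W le c u C"
      and w: "w \<in> W" "le z w" and wa: "sat W le c w A \<or> sat W le c w B"
    have "le y w" using tr y z w by blast
    then show "sat W le c w C" using h1 h2 w wa by blast
  qed
next
  case (MP A B)
  then show ?case using rf by auto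
qed (use rf in auto)

definition cut :: "nat \<Rightarrow> ('a \<Rightarrow> nat \<Rightarrow> bool) \<Rightarrow> 'a \<Rightarrow> nat \<Rightarrow> bool" where
  "cut n c x i \<longleftrightarrow> i < n \<and> c x i"

lemma sat_cut: "vars A \<subseteq> {..<n} \<Longrightarrow> sat W le (cut n c) x A = sat W le c x A"
  by (induction A arbitrary: x) (auto simp: cut_def)

lemma impl_n_vars: "impl_n n A \<Longrightarrow> vars A \<subseteq> {..<n}"
  by (simp add: impl_n_def)

lemma s_rep_impl: "s_rep n a b \<Longrightarrow> impl_n n b"
  by (induction rule: s_rep.induct) (auto simp: is_join_def)

lemma big_and_props: "n \<ge> 1 \<Longrightarrow> vars (big_and n) \<subseteq> {..<n} \<and> (sat W le c x (big_and n) \<longleftrightarrow> (\<forall>i<n. c x i))"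
proof (induction n)
  case 0
  then show ?case by simp
next
  case (Suc k)
  show ?case
  proof (cases k)
    case 0
    then show ?thesis by auto
  next
    case (Suc m)
    then have "big_and (Suc k) = And (big_and k) (Var k)" by simp
    then show ?thesis using Suc.IH Suc by (auto simp: less_Suc_eq)
  qed
qed

lemma main:
  assumes n1: "n \<ge> 1" and M: "model n W le c"
  shows "s_rep n \<phi> \<psi> \<Longrightarrow> \<forall>x\<in>sep_points n W le c.
     sat (sep_points n W le c) le c x \<phi> \<longleftrightarrow> sat (sep_points n W le c) le c x \<psi>"
proof -
  let ?S = "sep_points n W le c"
  have sub: "?S \<subseteq> W" by (auto simp: sep_points_def)
  have rf: "\<forall>x\<in>?S. le x x" using M sub unfolding model_def by blast
  have tr: "\<forall>x\<in>?S. \<forall>y\<in>?S. \<forall>z\<in>?S. le x y \<longrightarrow> le y z \<longrightarrow> le x z"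
    using M sub unfolding model_def by blast
  have mo: "\<forall>i. \<forall>x\<in>?S. \<forall>y\<in>?S. le x y \<longrightarrow> cut n c x i \<longrightarrow> cut n c y i"
    using M sub unfolding model_def cut_def by blast
  have imp: "sat ?S le c x B" if "ipc (Imp A B)" "vars A \<subseteq> {..<n}" "vars B \<subseteq> {..<n}"
      "x \<in> ?S" "sat ?S le c x A" for A B x
  proof -
    have "vars (Imp A B) \<subseteq> {..<n}" using that by simp
    then have "sat ?S le c x (Imp A B)"
      using sound[OF rf tr mo that(1) that(4)] sat_cut by metis
    then show ?thesis using rf that by auto
  qed
  have eqv: "sat ?S le c x A \<longleftrightarrow> sat ?S le c x B" if "ipc_equiv A B" "vars A \<subseteq> {..<n}"
    "vars B \<subseteq> {..<n}" "x \<in> ?S" for A B x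
    using imp that unfolding ipc_equiv_def by blast
  have IH: "\<forall>x\<in>?S. sat ?S le c x A \<longleftrightarrow> sat ?S le c x B"
    if "ipc_equiv chi X" "impl_n n chi" "vars X \<subseteq> {..<n}"
       "\<forall>x\<in>?S. sat ?S le c x X \<longleftrightarrow> sat ?S le c x A" "B = chi" for chi X A B
  proof
    fix x assume x: "x \<in> ?S"
    have "vars chi \<subseteq> {..<n}" using that(2) by (rule impl_n_vars)
    then have "sat ?S le c x chi \<longleftrightarrow> sat ?S le c x X" using eqv[OF that(1) _ that(3) x] by blast
    then show "sat ?S le c x A \<longleftrightarrow> sat ?S le c x B" using that(4,5) x by blast
  qed
  show "s_rep n \<phi> \<psi> \<Longrightarrow> ?thesis"
  proof (induction rule: s_rep.induct)
    case (sVar i chi)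
    show ?case by (rule IH[OF sVar(3,2), of "Var i"]) (use sVar(1) in auto)
  next
    case (sBot chi)
    have bv: "vars (big_and n) \<subseteq> {..<n}" using big_and_props[OF n1, of W le c] by (rule conjunct1)
    have nb: "\<not> sat ?S le c x (big_and n)" if xS: "x \<in> ?S" for x
    proof
      assume "sat ?S le c x (big_and n)"
      then have "\<forall>i<n. c x i" using big_and_props[OF n1, of ?S le c x] by (rule_tac iffD1) simp_all
      moreover obtain q where "q < n" "\<not> c x q" using xS unfolding sep_points_def separated_def by blast
      ultimately show False by blast
    qed
    have "\<forall>x\<in>?S. sat ?S le c x (big_and n) \<longleftrightarrow> sat ?S le c x Bot"
      using nb by simp
    then show ?case by (rule IH[OF sBot(2,1) bv]) simp
  next
    case (sAnd a \<alpha> b \<beta> chi)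
    have "vars \<alpha> \<subseteq> {..<n}" "vars \<beta> \<subseteq> {..<n}"
      using sAnd.hyps(1,2) s_rep_impl impl_n_vars by blast+
    then have v: "vars (And \<alpha> \<beta>) \<subseteq> {..<n}" by simp
    show ?case by (rule IH[OF sAnd.hyps(4,3) v]) (use sAnd.IH in auto)
  next
    case (sImp a \<alpha> b \<beta> chi)
    have "vars \<alpha> \<subseteq> {..<n}" "vars \<beta> \<subseteq> {..<n}"
      using sImp.hyps(1,2) s_rep_impl impl_n_vars by blast+
    then have v: "vars (Imp \<alpha> \<beta>) \<subseteq> {..<n}" by simp
    have "\<forall>x\<in>?S. sat ?S le c x (Imp \<alpha> \<beta>) \<longleftrightarrow> sat ?S le c x (Imp a b)"
    proof
      fix x assume "x \<in> ?S"
      show "sat ?S le c x (Imp \<alpha> \<beta>) \<longleftrightarrow> sat ?S le c x (Imp a b)"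
        unfolding sat.simps using sImp.IH by blast
    qed
    then show ?case by (rule IH[OF sImp.hyps(4,3) v]) simp
  next
    case (sOr a \<alpha> b \<beta> chi)
    have va: "vars \<alpha> \<subseteq> {..<n}" "vars \<beta> \<subseteq> {..<n}"
      using sOr.hyps(1,2) s_rep_impl impl_n_vars by blast+
    have ic: "impl_n n chi" and J: "\<And>th. impl_n n th \<Longrightarrow> ipc (Imp chi th) \<longleftrightarrow> ipc (Imp \<alpha> th) \<and> ipc (Imp \<beta> th)"
      using sOr.hyps(3) unfolding is_join_def by auto
    have vc: "vars chi \<subseteq> {..<n}" using ic impl_n_vars by blast
    have ac: "ipc (Imp \<alpha> chi)" "ipc (Imp \<beta> chi)" using J[OF ic] ipc_id by auto
    have key: "sat ?S le c x chi \<longleftrightarrow> sat ?S le c x \<alpha> \<or> sat ?S le c x \<beta>" if x: "x \<in> ?S" for x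
    proof
      assume "sat ?S le c x \<alpha> \<or> sat ?S le c x \<beta>"
      then show "sat ?S le c x chi"
      proof
        assume "sat ?S le c x \<alpha>" then show ?thesis by (rule imp[OF ac(1) va(1) vc x])
      next
        assume "sat ?S le c x \<beta>" then show ?thesis by (rule imp[OF ac(2) va(2) vc x])
      qed
    next
      assume xc: "sat ?S le c x chi"
      show "sat ?S le c x \<alpha> \<or> sat ?S le c x \<beta>"
      proof (rule ccontr)
        assume nab: "\<not> (sat ?S le c x \<alpha> \<or> sat ?S le c x \<beta>)"
        from x obtain q where q: "q < n" "\<not> c x q" "\<forall>y\<in>W. le x y \<and> y \<noteq> x \<longrightarrow> c y q"
          by (auto simp: sep_points_def separated_def)
        define th where "th = Imp (And (Imp \<alpha> (Var q)) (Imp \<beta> (Var q))) (Var q)"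
        have ith: "impl_n n th" using s_rep_impl[OF sOr.hyps(1)] s_rep_impl[OF sOr.hyps(2)] q(1)
          by (auto simp: impl_n_def th_def)
        have "ipc (Imp chi th)" using J[OF ith] or_bound or_bound2 unfolding th_def by blast
        then have sth: "sat ?S le c x th" by (rule imp[OF _ vc impl_n_vars[OF ith] x xc])
        have "sat ?S le c x (Imp \<alpha> (Var q))"
        proof (simp only: sat.simps, intro ballI impI)
          fix y assume y: "y \<in> ?S" "le x y" "sat ?S le c y \<alpha>"
          then have "y \<noteq> x" using nab by blast
          then show "c y q" using q(3) y sub by blast
        qed
        moreover have "sat ?S le c x (Imp \<beta> (Var q))"
        proof (simp only: sat.simps, intro ballI impI)
          fix y assume y: "y \<in> ?S" "le x y" "sat ?S le c y \<beta>"
          then have "y \<noteq> x" using nab by blast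
          then show "c y q" using q(3) y sub by blast
        qed
        ultimately have "c x q" using sth rf x unfolding th_def by simp
        then show False using q by simp
      qed
    qed
    show ?case
    proof
      fix x assume x: "x \<in> ?S"
      show "sat ?S le c x (Or a b) \<longleftrightarrow> sat ?S le c x chi"
        using key[OF x] sOr.IH x by simp
    qed
  qed
qed

theorem theorem3p18:
  fixes n :: nat and W :: "'a set" and le :: "'a \<Rightarrow> 'a \<Rightarrow> bool" and c :: "'a \<Rightarrow> nat \<Rightarrow> bool"
    and \<phi> \<psi> :: form and x :: 'a
  assumes "n \<ge> 1"
    and "vars \<phi> \<subseteq> {..<n}"
    and "s_rep n \<phi> \<psi>"
    and "model n W le c"
    and "x \<in> sep_points n W le c"
  shows "sat (sep_points n W le c) le c x \<phi> \<longleftrightarrow> sat (sep_points n W le c) le c x \<psi>"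
  using main[OF assms(1) assms(4) assms(3)] assms(5) by blast

end
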